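(* Let $n=2$ agents have additive valuations over a finite set $G$ of indivisible goods. Then there exists a probability distribution over (complete) allocations that is ex-ante EF and ex-post EFX. *)

theory Defs
  imports "HOL-Probability.Probability_Mass_Function"
begin

definition agents :: "nat set" where "agents = {0, 1}"

definition val :: "(nat \<Rightarrow> 'g \<Rightarrow> real) \<Rightarrow> nat \<Rightarrow> 'g set \<Rightarrow> real" where
  "val v i S = (\<Sum>g\<in>S. v i g)"

definition complete_allocation :: "'g set \<Rightarrow> (nat \<Rightarrow> 'g set) \<Rightarrow> bool" where
  "complete_allocation G A \<longleftrightarrow>
     (\<Union>i\<in>agents. A i) = G \<and>
     (\<forall>i\<in>agents. \<forall>j\<in>agents. i \<noteq> j \<longrightarrow> A i \<inter> A j = {}) \<and>
     (\<forall>i. i \<notin> agents \<longrightarrow> A i = {})"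

definition EFX :: "(nat \<Rightarrow> 'g \<Rightarrow> real) \<Rightarrow> (nat \<Rightarrow> 'g set) \<Rightarrow> bool" where
  "EFX v A \<longleftrightarrow> (\<forall>i\<in>agents. \<forall>j\<in>agents. \<forall>g\<in>A j.
      val v i (A i) \<ge> val v i (A j - {g}))"

definition ex_ante_EF :: "(nat \<Rightarrow> 'g \<Rightarrow> real) \<Rightarrow> (nat \<Rightarrow> 'g set) pmf \<Rightarrow> bool" where
  "ex_ante_EF v p \<longleftrightarrow> (\<forall>i\<in>agents. \<forall>j\<in>agents.
      measure_pmf.expectation p (\<lambda>A. val v i (A i)) \<ge> measure_pmf.expectation p (\<lambda>A. val v i (A j)))"

definition ex_post_EFX :: "(nat \<Rightarrow> 'g \<Rightarrow> real) \<Rightarrow> (nat \<Rightarrow> 'g set) pmf \<Rightarrow> bool" where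
  "ex_post_EFX v p \<longleftrightarrow> (\<forall>A\<in>set_pmf p. EFX v A)"

end

theory Submission
  imports Defs
begin

lemma cut:
  fixes w :: "'g \<Rightarrow> real"
  assumes fin: "finite G" and nn: "\<forall>g\<in>G. w g \<ge> 0"
  shows "\<exists>X\<subseteq>G. sum w X \<ge> sum w (G-X) \<and>
     (\<forall>S\<subseteq>G. sum w X - sum w (G-X) \<le> \<bar>sum w S - sum w (G-S)\<bar>) \<and>
     (\<forall>g\<in>X. sum w (G-X) \<ge> sum w (X-{g})) \<and>
     (\<forall>g\<in>G-X. sum w X \<ge> sum w ((G-X)-{g}))"
proof -
  define T where "T = sum w G"
  have sd: "\<And>S. S \<subseteq> G \<Longrightarrow> sum w (G - S) = T - sum w S"
    unfolding T_def using fin by (simp add: sum_diff)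
  let ?f = "\<lambda>S. \<bar>sum w S - sum w (G-S)\<bar>"
  obtain S where S: "S \<in> Pow G" "\<forall>T\<in>Pow G. ?f S \<le> ?f T"
  proof -
    from ex_is_arg_min_if_finite[of "Pow G" ?f] fin
    obtain S where "is_arg_min ?f (\<lambda>x. x \<in> Pow G) S" by auto
    then show ?thesis using that unfolding is_arg_min_def by (meson not_le)
  qed
  obtain L where L: "L \<subseteq> G" "?f L = ?f S" "sum w L \<ge> sum w (G-L)"
  proof (cases "sum w S \<ge> sum w (G-S)")
    case True then show ?thesis using that S by auto
  next
    case False
    have "G - (G - S) = S" using S by auto
    then show ?thesis using that[of "G-S"] False by auto
  qed
  define X where "X = {g\<in>L. w g \<noteq> 0}"
  have XG: "X \<subseteq> G" using L X_def by auto
  have fL: "finite L" using L fin finite_subset by auto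
  have sX: "sum w X = sum w L" unfolding X_def
    by (rule sum.mono_neutral_left[OF fL]) auto
  have min: "\<forall>U\<subseteq>G. sum w X - sum w (G-X) \<le> ?f U"
    using S L sX sd XG by auto
  have geq: "sum w X \<ge> sum w (G-X)" using L sX sd XG by auto
  have fX: "finite X" using XG fin finite_subset by auto
  have p1: "\<forall>g\<in>X. sum w (G-X) \<ge> sum w (X-{g})"
  proof
    fix g assume g: "g \<in> X"
    have wg: "w g > 0" using g nn XG X_def by force
    have r: "sum w (X-{g}) = sum w X - w g" using g fX by (simp add: sum_diff1)
    have "X - {g} \<subseteq> G" using XG by auto
    then have "sum w X - sum w (G-X) \<le> \<bar>sum w (X-{g}) - (T - sum w (X-{g}))\<bar>"
      using min sd by auto
    then show "sum w (G-X) \<ge> sum w (X-{g})" using r sd[OF XG] wg by (auto simp: abs_if split: if_splits)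
  qed
  have p2: "\<forall>g\<in>G-X. sum w X \<ge> sum w ((G-X)-{g})"
  proof
    fix g assume "g \<in> G - X"
    have "sum w ((G-X)-{g}) \<le> sum w (G-X)"
      by (rule sum_mono2) (use fin nn in auto)
    then show "sum w X \<ge> sum w ((G-X)-{g})" using geq by linarith
  qed
  show ?thesis using XG geq min p1 p2 by blast
qed


definition alloc :: "'g set \<Rightarrow> 'g set \<Rightarrow> nat \<Rightarrow> 'g set" where
  "alloc P Q = (\<lambda>i. if i = 0 then P else if i = 1 then Q else {})"

lemma efx_alloc:
  assumes "\<forall>g\<in>Q. val v 0 P \<ge> val v 0 (Q-{g})" "\<forall>g\<in>Q. val v 1 Q \<ge> val v 1 (Q-{g})"
    "\<forall>g\<in>P. val v 0 P \<ge> val v 0 (P-{g})" "\<forall>g\<in>P. val v 1 Q \<ge> val v 1 (P-{g})"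
  shows "EFX v (alloc P Q)"
  using assms unfolding EFX_def agents_def alloc_def by auto

lemma complete_alloc:
  assumes "X \<subseteq> G" shows "complete_allocation G (alloc X (G-X))" "complete_allocation G (alloc (G-X) X)"
  using assms unfolding complete_allocation_def agents_def alloc_def by auto

lemma monorem:
  fixes w :: "'g \<Rightarrow> real"
  assumes "finite G" "\<forall>g\<in>G. w g \<ge> 0" "S \<subseteq> G"
  shows "sum w (S - {g}) \<le> sum w S"
  by (rule sum_mono2) (use assms finite_subset in auto)

theorem proposition1:
  fixes G :: "'g set" and v :: "nat \<Rightarrow> 'g \<Rightarrow> real"
  assumes "finite G"
    and "\<And>i g. i \<in> agents \<Longrightarrow> g \<in> G \<Longrightarrow> v i g \<ge> 0"
  shows "\<exists>p :: (nat \<Rightarrow> 'g set) pmf.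
           (\<forall>A\<in>set_pmf p. complete_allocation G A) \<and> ex_ante_EF v p \<and> ex_post_EFX v p"
proof -
  have nn0: "\<forall>g\<in>G. v 0 g \<ge> 0" and nn1: "\<forall>g\<in>G. v 1 g \<ge> 0" using assms(2) by (auto simp: agents_def)
  obtain X0 where X0: "X0 \<subseteq> G" "sum (v 0) X0 \<ge> sum (v 0) (G-X0)"
     "\<forall>S\<subseteq>G. sum (v 0) X0 - sum (v 0) (G-X0) \<le> \<bar>sum (v 0) S - sum (v 0) (G-S)\<bar>"
     "\<forall>g\<in>X0. sum (v 0) (G-X0) \<ge> sum (v 0) (X0-{g})"
     "\<forall>g\<in>G-X0. sum (v 0) X0 \<ge> sum (v 0) ((G-X0)-{g})"
    using cut[OF assms(1) nn0] by blast
  obtain X1 where X1: "X1 \<subseteq> G" "sum (v 1) X1 \<ge> sum (v 1) (G-X1)"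
     "\<forall>S\<subseteq>G. sum (v 1) X1 - sum (v 1) (G-X1) \<le> \<bar>sum (v 1) S - sum (v 1) (G-S)\<bar>"
     "\<forall>g\<in>X1. sum (v 1) (G-X1) \<ge> sum (v 1) (X1-{g})"
     "\<forall>g\<in>G-X1. sum (v 1) X1 \<ge> sum (v 1) ((G-X1)-{g})"
    using cut[OF assms(1) nn1] by blast
  have m0: "\<And>S g. S \<subseteq> G \<Longrightarrow> sum (v 0) (S - {g}) \<le> sum (v 0) S" using monorem[OF assms(1) nn0] by blast
  have m1: "\<And>S g. S \<subseteq> G \<Longrightarrow> sum (v 1) (S - {g}) \<le> sum (v 1) S" using monorem[OF assms(1) nn1] by blast
  define A where "A = (if sum (v 1) (G-X0) \<le> sum (v 1) X0 then alloc (G-X0) X0 else alloc X0 (G-X0))"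
  define B where "B = (if sum (v 0) (G-X1) \<le> sum (v 0) X1 then alloc X1 (G-X1) else alloc (G-X1) X1)"
  define p where "p = map_pmf (\<lambda>b. if b then A else B) (bernoulli_pmf (1/2))"
  have sp: "set_pmf p = {A, B}" unfolding p_def by auto
  have cA: "complete_allocation G A" "complete_allocation G B"
    unfolding A_def B_def using complete_alloc X0(1) X1(1) by auto
  have eA: "EFX v A"
  proof (cases "sum (v 1) (G-X0) \<le> sum (v 1) X0")
    case True
    have "EFX v (alloc (G-X0) X0)"
      apply (rule efx_alloc)
      using X0(4) m1[of X0] m0[of "G-X0"] m1[of "G-X0"] X0(1) True
      by (simp_all add: val_def) (meson order.trans Diff_subset)+
    then show ?thesis using True unfolding A_def by simp
  next
    case False
    have "EFX v (alloc X0 (G-X0))"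
      apply (rule efx_alloc)
      using X0(5) m1[of "G-X0"] m0[of X0] m1[of X0] X0(1) False
      by (simp_all add: val_def) (meson order.trans not_le less_imp_le Diff_subset)+
    then show ?thesis using False unfolding A_def by simp
  qed
  have eB: "EFX v B"
  proof (cases "sum (v 0) (G-X1) \<le> sum (v 0) X1")
    case True
    have "EFX v (alloc X1 (G-X1))"
      apply (rule efx_alloc)
      using X1(4) m0[of X1] m0[of "G-X1"] m1[of "G-X1"] X1(1) True
      by (simp_all add: val_def) (meson order.trans Diff_subset)+
    then show ?thesis using True unfolding B_def by simp
  next
    case False
    have "EFX v (alloc (G-X1) X1)"
      apply (rule efx_alloc)
      using X1(5) m0[of "G-X1"] m0[of X1] m1[of X1] X1(1) False
      by (simp_all add: val_def) (meson order.trans not_le less_imp_le Diff_subset)+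
    then show ?thesis using False unfolding B_def by simp
  qed
  have h0: "sum (v 0) X0 - sum (v 0) (G-X0) \<le> \<bar>sum (v 0) X1 - sum (v 0) (G-X1)\<bar>"
    using X0(3) X1(1) by blast
  have h1: "sum (v 1) X1 - sum (v 1) (G-X1) \<le> \<bar>sum (v 1) X0 - sum (v 1) (G-X0)\<bar>"
    using X1(3) X0(1) by blast
  have ea: "ex_ante_EF v p"
    unfolding ex_ante_EF_def agents_def p_def
    using h0 h1 X0(2) X1(2)
    by (auto simp: A_def B_def alloc_def val_def abs_if)
  show ?thesis
    apply (rule exI[of _ p])
    using sp cA eA eB ea by (auto simp: ex_post_EFX_def)
qed

end
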